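(* Let $f$ be a Riemann-integrable function on $[0,1]$, let $L=\int_0^1f(x)\,dx$, and for $\varepsilon>0$ define \[D=\{x\in[0,1]: f(x)<0\},\qquad L_\varepsilon=\{x\in[0,1]: f(x)\in[0,L+\varepsilon]\}.\] Then at least one of the following holds: (i) $\left|\int_Df(x)\,dx\right|\ge\frac\varepsilon2$; (ii) $\mu(L_\varepsilon\cup D)\ge\frac{\varepsilon}{2(L+\varepsilon)}$, where $\mu$ denotes Lebesgue measure. *)

theory Defs
  imports "HOL-Analysis.Analysis"
begin

text \<open>Riemann integral on a compact interval: limit of Riemann sums over tagged
divisions of mesh less than delta (constant gauge of radius delta).\<close>
definition has_riemann_integral :: "(real \<Rightarrow> real) \<Rightarrow> real \<Rightarrow> real set \<Rightarrow> bool"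
  (infixr \<open>has'_riemann'_integral\<close> 46) where
  "(f has_riemann_integral I) S \<longleftrightarrow>
     (\<forall>e>0. \<exists>d>0. \<forall>p. p tagged_division_of S \<and> (\<lambda>x. ball x d) fine p \<longrightarrow>
        \<bar>(\<Sum>(x,K)\<in>p. Henstock_Kurzweil_Integration.content K * f x) - I\<bar> < e)"

end

theory Submission
  imports Defs
begin

lemma cover_lemma:
  fixes x :: real and N :: nat
  assumes "N > 0" "0 \<le> x" "x \<le> 1"
  shows "\<exists>k<N. x \<in> {real k / N .. real (Suc k) / N}"
proof -
  define k where "k = min (nat \<lfloor>x*N\<rfloor>) (N-1)"
  have "k < N" using assms by (simp add: k_def)
  moreover have "real k \<le> x * N"
  proof -
    have "real k \<le> real (nat \<lfloor>x*N\<rfloor>)" by (simp add: k_def)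
    also have "\<dots> \<le> x*N" using assms by simp
    finally show ?thesis .
  qed
  moreover have "x * N \<le> real (Suc k)"
  proof (cases "nat \<lfloor>x*N\<rfloor> \<le> N - 1")
    case True
    then have "k = nat \<lfloor>x*N\<rfloor>" by (simp add: k_def)
    then show ?thesis using assms by linarith
  next
    case False
    then have "k = N - 1" by (simp add: k_def)
    then have "real (Suc k) = N" using assms by simp
    then show ?thesis using assms by (simp add: mult_left_le_one_le)
  qed
  ultimately show ?thesis using assms
    by (intro exI[of _ k]) (auto simp: field_simps)
qed

lemma uniform_division:
  fixes N :: nat and \<tau> :: "nat \<Rightarrow> real" and d :: real
  assumes N: "N > 0" and Nd: "1 / real N < d"
    and tau: "\<And>k. k < N \<Longrightarrow> \<tau> k \<in> {real k / N .. real (Suc k) / N}"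
  defines "p \<equiv> (\<lambda>k. (\<tau> k, {real k / N .. real (Suc k) / N})) ` {..<N}"
  shows "p tagged_division_of {0..1}" "(\<lambda>x. ball x d) fine p"
    "(\<Sum>(x,K)\<in>p. Henstock_Kurzweil_Integration.content K * f x) = (\<Sum>k<N. f (\<tau> k) / N)"
proof -
  have Npos: "real N > 0" using N by simp
  show "p tagged_division_of {0..1}"
  proof (rule tagged_division_ofI)
    show "finite p" unfolding p_def by simp
    show "x \<in> K" if "(x,K) \<in> p" for x K using that tau unfolding p_def by auto
    show "K \<subseteq> {0..1}" if xK: "(x,K) \<in> p" for x K
    proof -
      obtain k where k: "k < N" "K = {real k / N .. real (Suc k) / N}" using xK unfolding p_def by auto
      have "real (Suc k) / N \<le> 1" using k Npos by (simp add: divide_le_eq)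
      moreover have "0 \<le> real k / N" by simp
      ultimately show ?thesis using k by auto
    qed
    show "\<exists>a b. K = cbox a b" if "(x,K) \<in> p" for x K using that unfolding p_def by auto
    show "interior K1 \<inter> interior K2 = {}" if h: "(x1,K1) \<in> p" "(x2,K2) \<in> p" "(x1,K1) \<noteq> (x2,K2)" for x1 K1 x2 K2
    proof -
      obtain k1 where k1: "k1 < N" "x1 = \<tau> k1" "K1 = {real k1 / N .. real (Suc k1) / N}" using h(1) unfolding p_def by auto
      obtain k2 where k2: "k2 < N" "x2 = \<tau> k2" "K2 = {real k2 / N .. real (Suc k2) / N}" using h(2) unfolding p_def by auto
      have "k1 \<noteq> k2" using h(3) k1 k2 by auto
      then have "k1 < k2 \<or> k2 < k1" by arith
      then show ?thesis
      proof
        assume "k1 < k2"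
        then have "real (Suc k1) / N \<le> real k2 / N" using Npos by (simp add: divide_right_mono)
        then show ?thesis using k1 k2 by auto
      next
        assume "k2 < k1"
        then have "real (Suc k2) / N \<le> real k1 / N" using Npos by (simp add: divide_right_mono)
        then show ?thesis using k1 k2 by auto
      qed
    qed
    show "\<Union>{K. \<exists>x. (x,K) \<in> p} = {0..1}"
    proof
      show "\<Union>{K. \<exists>x. (x,K) \<in> p} \<subseteq> {0..1}"
      proof
        fix y assume "y \<in> \<Union>{K. \<exists>x. (x,K) \<in> p}"
        then obtain k where k: "k < N" "y \<in> {real k / N .. real (Suc k) / N}" unfolding p_def by auto
        have "real (Suc k) / N \<le> 1" using k Npos by (simp add: divide_le_eq)
        moreover have "0 \<le> real k / N" by simp
        moreover have "real k / N \<le> y" "y \<le> real (Suc k) / N" using k(2) by (simp_all only: atLeastAtMost_iff)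
        ultimately show "y \<in> {0..1}" unfolding atLeastAtMost_iff by linarith
      qed
      show "{0..1} \<subseteq> \<Union>{K. \<exists>x. (x,K) \<in> p}"
      proof
        fix y :: real assume "y \<in> {0..1}"
        then obtain k where "k < N" "y \<in> {real k / N .. real (Suc k) / N}" using cover_lemma[OF N] by auto
        then show "y \<in> \<Union>{K. \<exists>x. (x,K) \<in> p}" unfolding p_def by blast
      qed
    qed
  qed
  show "(\<lambda>x. ball x d) fine p"
  proof (rule fineI)
    fix x K assume "(x,K) \<in> p"
    then obtain k where k: "k < N" "x = \<tau> k" "K = {real k / N .. real (Suc k) / N}" unfolding p_def by auto
    have xk: "x \<in> K" using k tau by auto
    show "K \<subseteq> ball x d"
    proof
      fix y assume y: "y \<in> K"
      have "real (Suc k) / N - real k / N = 1 / N" by (simp add: diff_divide_distrib[symmetric])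
      then have "\<bar>y - x\<bar> \<le> 1 / N" using xk y k by auto
      then show "y \<in> ball x d" using Nd by (simp add: dist_real_def abs_minus_commute)
    qed
  qed
  have inj: "inj_on (\<lambda>k. (\<tau> k, {real k / N .. real (Suc k) / N})) {..<N}"
  proof (rule inj_onI)
    fix a b assume "a \<in> {..<N}" "b \<in> {..<N}" and eq: "(\<tau> a, {real a / N .. real (Suc a) / N}) = (\<tau> b, {real b / N .. real (Suc b) / N})"
    have "real a / N \<le> real (Suc a) / N" "real b / N \<le> real (Suc b) / N" using Npos by (simp_all add: divide_right_mono)
    then have "real a / N = real b / N" using eq by (simp add: Icc_eq_Icc)
    then show "a = b" using Npos by simp
  qed
  show "(\<Sum>(x,K)\<in>p. Henstock_Kurzweil_Integration.content K * f x) = (\<Sum>k<N. f (\<tau> k) / N)"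
    unfolding p_def
  proof (subst sum.reindex[OF inj], rule sum.cong)
    fix k assume "k \<in> {..<N}"
    have "real k / N \<le> real (Suc k) / N" using Npos by (simp add: divide_right_mono)
    moreover have "real (Suc k) / N - real k / N = 1 / N" by (simp add: diff_divide_distrib[symmetric])
    ultimately show "((\<lambda>(x,K). Henstock_Kurzweil_Integration.content K * f x) \<circ> (\<lambda>k. (\<tau> k, {real k / N .. real (Suc k) / N}))) k = f (\<tau> k) / N"
      by simp
  qed simp
qed

lemma riemann_bounded:
  assumes "(f has_riemann_integral L) {0..1}"
  shows "\<exists>B. \<forall>x\<in>{0..1}. \<bar>f x\<bar> \<le> B"
proof -
  obtain d where d: "d > 0" and H: "\<And>p. p tagged_division_of {0..1} \<Longrightarrow> (\<lambda>x. ball x d) fine p \<Longrightarrow>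
        \<bar>(\<Sum>(x,K)\<in>p. Henstock_Kurzweil_Integration.content K * f x) - L\<bar> < 1"
    using assms unfolding has_riemann_integral_def by (meson zero_less_one)
  obtain n :: nat where n: "inverse (real (Suc n)) < d" using reals_Archimedean[OF d] by blast
  define N where "N = Suc n"
  have N: "N > 0" and Nd: "1 / real N < d" using n by (auto simp: N_def inverse_eq_divide)
  have Npos: "real N > 0" using N by simp
  define \<tau>0 where "\<tau>0 = (\<lambda>k. real k / N)"
  have t0: "\<tau>0 k \<in> {real k / N .. real (Suc k) / N}" if "k < N" for k
    using Npos by (simp add: \<tau>0_def divide_right_mono)
  have S0: "\<bar>(\<Sum>k<N. f (\<tau>0 k) / N) - L\<bar> < 1"
    using H[OF uniform_division(1,2)[OF N Nd t0]] uniform_division(3)[OF N Nd t0] by metis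
  show ?thesis
  proof (intro exI ballI)
    fix x :: real assume x: "x \<in> {0..1}"
    then obtain k where k: "k < N" "x \<in> {real k / N .. real (Suc k) / N}" using cover_lemma[OF N] by auto
    define \<tau>1 where "\<tau>1 = \<tau>0(k := x)"
    have t1: "\<tau>1 j \<in> {real j / N .. real (Suc j) / N}" if "j < N" for j
      using t0[OF that] k by (auto simp: \<tau>1_def)
    have S1: "\<bar>(\<Sum>j<N. f (\<tau>1 j) / N) - L\<bar> < 1"
      using H[OF uniform_division(1,2)[OF N Nd t1]] uniform_division(3)[OF N Nd t1] by metis
    have "(\<Sum>j<N. f (\<tau>1 j) / N) - (\<Sum>j<N. f (\<tau>0 j) / N) = (\<Sum>j<N. f (\<tau>1 j) / N - f (\<tau>0 j) / N)"
      by (simp add: sum_subtractf)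
    also have "\<dots> = (\<Sum>j\<in>{k}. f (\<tau>1 j) / N - f (\<tau>0 j) / N)"
      by (rule sum.mono_neutral_right) (use k in \<open>auto simp: \<tau>1_def\<close>)
    also have "\<dots> = f x / N - f (\<tau>0 k) / N" by (simp add: \<tau>1_def)
    finally have "\<bar>f x / N - f (\<tau>0 k) / N\<bar> < 2" using S0 S1 by linarith
    then have "\<bar>f x - f (\<tau>0 k)\<bar> / N < 2" by (simp add: diff_divide_distrib[symmetric])
    then have "\<bar>f x - f (\<tau>0 k)\<bar> < 2 * N" using Npos by (simp add: divide_less_eq)
    moreover have "\<bar>f (\<tau>0 k)\<bar> \<le> (\<Sum>j<N. \<bar>f (\<tau>0 j)\<bar>)"
      using k by (intro member_le_sum) auto
    ultimately show "\<bar>f x\<bar> \<le> (\<Sum>j<N. \<bar>f (\<tau>0 j)\<bar>) + 2 * N" by linarith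
  qed
qed

theorem lemma3p14:
  fixes f :: "real \<Rightarrow> real" and L \<epsilon> :: real and D L\<^sub>\<epsilon> :: "real set"
  assumes "(f has_riemann_integral L) {0..1}"
    and "\<epsilon> > 0"
    and "D = {x \<in> {0..1}. f x < 0}"
    and "L\<^sub>\<epsilon> = {x \<in> {0..1}. f x \<in> {0..L + \<epsilon>}}"
  shows "\<bar>LINT x:D|lebesgue. f x\<bar> \<ge> \<epsilon> / 2
         \<or> measure lebesgue (L\<^sub>\<epsilon> \<union> D) \<ge> \<epsilon> / (2 * (L + \<epsilon>))"
proof -
  define S :: "real set" where "S = {0..1}"
  note rie = assms(1)
  have hint: "(f has_integral L) S"
    unfolding S_def has_integral_real
  proof (intro allI impI)
    fix e :: real assume "e > 0"
    then obtain d where d: "d > 0" and H: "\<forall>p. p tagged_division_of {0..1} \<and> (\<lambda>x. ball x d) fine p \<longrightarrow>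
        \<bar>(\<Sum>(x,K)\<in>p. Henstock_Kurzweil_Integration.content K * f x) - L\<bar> < e"
      using rie unfolding has_riemann_integral_def by blast
    show "\<exists>\<gamma>. gauge \<gamma> \<and> (\<forall>\<D>. \<D> tagged_division_of {0..1} \<and> \<gamma> fine \<D> \<longrightarrow>
        norm ((\<Sum>(x, k)\<in>\<D>. Henstock_Kurzweil_Integration.content k *\<^sub>R f x) - L) < e)"
      using H d by (intro exI[of _ "\<lambda>x. ball x d"]) (auto simp: gauge_ball)
  qed
  obtain B where B: "\<And>x. x \<in> S \<Longrightarrow> \<bar>f x\<bar> \<le> B" using riemann_bounded[OF rie] S_def by blast
  have absint: "set_integrable lebesgue S f"
    using absolutely_integrable_integrable_bound[of S f "\<lambda>_. B"] B hint
    by (auto simp: S_def integrable_on_def)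
  have LS: "(LINT x:S|lebesgue. f x) = L"
    using set_lebesgue_integral_eq_integral(2)[OF absint] hint by (simp add: integral_unique)
  define g where "g x = indicator S x * f x" for x
  have gint: "integrable lebesgue g" using absint unfolding set_integrable_def g_def by simp
  have gm[measurable]: "g \<in> borel_measurable lebesgue" using gint by (rule borel_measurable_integrable)
  have Sm[measurable]: "S \<in> sets lebesgue" unfolding S_def by simp
  have Dg: "D = {x. g x < 0}" unfolding assms(3) g_def S_def by (auto simp: indicator_def)
  have "{x \<in> space lebesgue. g x < 0} \<in> sets lebesgue" by measurable
  then have Dm[measurable]: "D \<in> sets lebesgue" unfolding Dg by simp
  have DS: "D \<subseteq> S" using assms(3) S_def by auto
  have Dint: "set_integrable lebesgue D f" by (rule set_integrable_subset[OF absint Dm DS])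
  have SDm: "S - D \<in> sets lebesgue" by measurable
  have SDint: "set_integrable lebesgue (S - D) f" by (rule set_integrable_subset[OF absint SDm]) auto
  define gD where "gD x = indicator D x * f x" for x
  define gR where "gR x = indicator (S - D) x * f x" for x
  have gDint: "integrable lebesgue gD" using Dint unfolding set_integrable_def gD_def by simp
  have gRint: "integrable lebesgue gR" using SDint unfolding set_integrable_def gR_def by simp
  have gsplit: "g = (\<lambda>x. gD x + gR x)" using DS
    by (auto simp: g_def gD_def gR_def indicator_def fun_eq_iff)
  have IDL: "(LINT x:D|lebesgue. f x) = integral\<^sup>L lebesgue gD"
    by (simp add: set_lebesgue_integral_def gD_def[abs_def])
  have Lsum: "L = integral\<^sup>L lebesgue gD + integral\<^sup>L lebesgue gR"
  proof -
    have "L = integral\<^sup>L lebesgue g" using LS by (simp add: set_lebesgue_integral_def g_def[abs_def])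
    also have "\<dots> = integral\<^sup>L lebesgue gD + integral\<^sup>L lebesgue gR"
      unfolding gsplit by (rule Bochner_Integration.integral_add[OF gDint gRint])
    finally show ?thesis .
  qed
  define A where "A = L\<^sub>\<epsilon> \<union> D"
  show ?thesis
  proof (cases "L + \<epsilon> > 0")
    case False
    then have "\<epsilon> / (2 * (L + \<epsilon>)) \<le> 0" using assms(2) by (simp add: divide_nonneg_nonpos)
    moreover have "0 \<le> measure lebesgue (L\<^sub>\<epsilon> \<union> D)" by (rule measure_nonneg)
    ultimately show ?thesis by linarith
  next
    case cpos: True
    define c where "c = L + \<epsilon>"
    have c: "c > 0" using cpos c_def by simp
    define Bs where "Bs = {x \<in> S. f x > c}"
    have Bg: "Bs = {x. g x > c}" unfolding Bs_def g_def using c by (auto simp: indicator_def)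
    have "{x \<in> space lebesgue. c < g x} \<in> sets lebesgue" by measurable
    then have Bm[measurable]: "Bs \<in> sets lebesgue" unfolding Bg by simp
    have AB: "A = S - Bs" unfolding A_def Bs_def assms(3,4) c_def S_def using cpos by auto
    have Sfin: "emeasure lebesgue S \<noteq> \<infinity>" unfolding S_def
      using lmeasurable_interval(1)[of 0 "1::real"] by (simp add: fmeasurable_def)
    have muA: "measure lebesgue A = 1 - measure lebesgue Bs"
      unfolding AB by (subst measure_Diff[OF Sfin Sm Bm]) (auto simp: Bs_def S_def)
    have Bind: "integrable lebesgue (\<lambda>x. c * indicator Bs x)"
    proof -
      have "emeasure lebesgue Bs \<le> emeasure lebesgue S"
        by (rule emeasure_mono) (auto simp: Bs_def)
      then have "emeasure lebesgue Bs < \<infinity>" using Sfin by (simp add: less_top order_le_less_trans)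
      then have "integrable lebesgue (indicator Bs :: real \<Rightarrow> real)"
        using Bm by (intro integrable_real_indicator) auto
      then show ?thesis by simp
    qed
    have Rge: "c * measure lebesgue Bs \<le> integral\<^sup>L lebesgue gR"
    proof -
      have "c * measure lebesgue Bs = integral\<^sup>L lebesgue (\<lambda>x. c * indicator Bs x)"
        by simp
      also have "\<dots> \<le> integral\<^sup>L lebesgue gR"
      proof (rule integral_mono[OF Bind gRint])
        fix x
        show "c * indicator Bs x \<le> gR x"
          unfolding gR_def Bs_def assms(3) using c by (auto simp: indicator_def S_def)
      qed
      finally show ?thesis .
    qed
    show ?thesis
    proof (cases "\<epsilon> / 2 \<le> \<bar>LINT x:D|lebesgue. f x\<bar>")
      case True then show ?thesis by simp
    next
      case False
      then have gDb: "integral\<^sup>L lebesgue gD > - \<epsilon> / 2" using IDL by linarith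
      have "c * (1 - measure lebesgue A) = c * measure lebesgue Bs" using muA by simp
      then have "L > - \<epsilon> / 2 + c * (1 - measure lebesgue A)" using gDb Lsum Rge muA \<open>c * (1 - measure lebesgue A) = c * measure lebesgue Bs\<close> by linarith
      then have "c * measure lebesgue A > \<epsilon> / 2" using c_def by (simp add: algebra_simps)
      then have "measure lebesgue A > \<epsilon> / (2 * c)" using c
        by (simp add: divide_less_eq mult.commute mult.left_commute)
      then show ?thesis
        unfolding A_def c_def by simp
    qed
  qed
qed

end
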